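(* Assume $2^{\aleph_0}=\aleph_1$ (so that $\omega_1^{<\omega_1}=\omega_1$). Let $G$ be a closed $\omega_1$-Baire subgroup of $S_{\omega_1}$. Then there is a good quantifier $Q_G$ of type $\langle 2\rangle$ on $\omega_1$ with $\mathrm{Aut}(Q_G)=G$.
   Context: $S_{\omega_1}$ is the group of permutations of $\omega_1$ with the subspace topology from $\omega_1^{\omega_1}$, where basic open sets are given by countable partial functions. $2^{\omega_1\times\omega_1}$ has basic open sets $\{f:s\subseteq f\}$ for countable partial functions $s$. A subspace is $\omega_1$-Baire if the intersection of any $\omega_1$ many open dense subsets of it is dense in it. A quantifier of type $\langle 2\rangle$ on $\omega_1$ is a family $Q$ of subsets of $\omega_1\times\omega_1$, i.e. $Q\subseteq2^{\omega_1\times\omega_1}$; it is downwards closed if closed under subsets. For a map $p$ and $A\subseteq\omega_1^2$, $p(A)=\{(p(a),p(b)):(a,b)\in A\}$. A function $p:\beta\to\omega_1$ with $\beta<\omega_1$ is compatible with $Q$ if for every $A\subseteq\beta\times\beta$, $A\in Q\iff p(A)\in Q$. A permutation $f$ of $\omega_1$ fixes $Q$ if $A\in Q\iff f(A)\in Q$ for all $A\subseteq\omega_1^2$; $\mathrm{Aut}(Q)$ is the group of such permutations. $Q$ is good if it is closed, downwards closed, and every injection $p:\beta\to\omega_1$ with $\beta<\omega_1$ compatible with $Q$ extends to a permutation of $\omega_1$ fixing $Q$. *)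

theory Defs
  imports Main "HOL-Library.Countable_Set" "HOL-Library.Equipollence"
begin

text \<open>The type 'a together with a well-order W on it represents omega_1:
  W is a well-order of the whole type, the type is uncountable, and every
  proper initial segment is countable.\<close>
definition omega1_order :: "'a rel \<Rightarrow> bool" where
  "omega1_order W \<longleftrightarrow> well_order_on UNIV W \<and> \<not> countable (UNIV :: 'a set)
      \<and> (\<forall>a. countable (underS W a))"

text \<open>Topology on function spaces 'i => 'v generated by countable partial functions.\<close>
definition agrees :: "('i \<rightharpoonup> 'v) \<Rightarrow> ('i \<Rightarrow> 'v) \<Rightarrow> bool" where
  "agrees s f \<longleftrightarrow> (\<forall>x\<in>dom s. s x = Some (f x))"

definition closed_in_sub :: "('i \<Rightarrow> 'v) set \<Rightarrow> ('i \<Rightarrow> 'v) set \<Rightarrow> bool" where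
  "closed_in_sub X C \<longleftrightarrow> C \<subseteq> X \<and>
     (\<forall>f\<in>X - C. \<exists>s. countable (dom s) \<and> agrees s f \<and> (\<forall>g\<in>C. \<not> agrees s g))"

definition open_in_sub :: "('i \<Rightarrow> 'v) set \<Rightarrow> ('i \<Rightarrow> 'v) set \<Rightarrow> bool" where
  "open_in_sub X U \<longleftrightarrow> U \<subseteq> X \<and>
     (\<forall>f\<in>U. \<exists>s. countable (dom s) \<and> agrees s f \<and> (\<forall>g\<in>X. agrees s g \<longrightarrow> g \<in> U))"

definition dense_in_sub :: "('i \<Rightarrow> 'v) set \<Rightarrow> ('i \<Rightarrow> 'v) set \<Rightarrow> bool" where
  "dense_in_sub X D \<longleftrightarrow>
     (\<forall>s. countable (dom s) \<longrightarrow> (\<exists>g\<in>X. agrees s g) \<longrightarrow> (\<exists>g\<in>D. agrees s g))"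

text \<open>X is kappa-Baire where kappa = |I|: the intersection of any I-indexed family
  of open dense subsets of X is dense in X (used with I = the omega_1 type).\<close>
definition Baire_idx :: "'a set \<Rightarrow> ('i \<Rightarrow> 'v) set \<Rightarrow> bool" where
  "Baire_idx I X \<longleftrightarrow> (\<forall>U :: 'a \<Rightarrow> ('i \<Rightarrow> 'v) set.
     (\<forall>i\<in>I. open_in_sub X (U i) \<and> dense_in_sub X (U i)) \<longrightarrow> dense_in_sub X (\<Inter>i\<in>I. U i))"

definition perm_subgroup :: "('a \<Rightarrow> 'a) set \<Rightarrow> bool" where
  "perm_subgroup G \<longleftrightarrow> G \<subseteq> {f. bij f} \<and> id \<in> G \<and>
     (\<forall>f\<in>G. \<forall>g\<in>G. f \<circ> g \<in> G) \<and> (\<forall>f\<in>G. inv f \<in> G)"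

text \<open>Quantifiers of type <2>: Q :: ('a \<times> 'a) set set.\<close>
definition pimg :: "('a \<Rightarrow> 'a) \<Rightarrow> ('a \<times> 'a) set \<Rightarrow> ('a \<times> 'a) set" where
  "pimg p A = (\<lambda>(a, b). (p a, p b)) ` A"

definition q_closed :: "('a \<times> 'a) set set \<Rightarrow> bool" where
  "q_closed Q \<longleftrightarrow> closed_in_sub UNIV {P. Collect P \<in> Q}"

definition down_closed :: "('a \<times> 'a) set set \<Rightarrow> bool" where
  "down_closed Q \<longleftrightarrow> (\<forall>A\<in>Q. \<forall>B. B \<subseteq> A \<longrightarrow> B \<in> Q)"

definition compatible :: "'a set \<Rightarrow> ('a \<Rightarrow> 'a) \<Rightarrow> ('a \<times> 'a) set set \<Rightarrow> bool" where
  "compatible \<beta> p Q \<longleftrightarrow> (\<forall>A. A \<subseteq> \<beta> \<times> \<beta> \<longrightarrow> (A \<in> Q \<longleftrightarrow> pimg p A \<in> Q))"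

definition fixes_Q :: "('a \<Rightarrow> 'a) \<Rightarrow> ('a \<times> 'a) set set \<Rightarrow> bool" where
  "fixes_Q f Q \<longleftrightarrow> (\<forall>A. A \<in> Q \<longleftrightarrow> pimg f A \<in> Q)"

definition Aut :: "('a \<times> 'a) set set \<Rightarrow> ('a \<Rightarrow> 'a) set" where
  "Aut Q = {f. bij f \<and> fixes_Q f Q}"

text \<open>Ordinals beta < omega_1 are the proper initial segments underS W a.\<close>
definition good :: "'a rel \<Rightarrow> ('a \<times> 'a) set set \<Rightarrow> bool" where
  "good W Q \<longleftrightarrow> q_closed Q \<and> down_closed Q \<and>
     (\<forall>a p. inj_on p (underS W a) \<longrightarrow> compatible (underS W a) p Q \<longrightarrow>
        (\<exists>f. bij f \<and> fixes_Q f Q \<and> (\<forall>x\<in>underS W a. f x = p x)))"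

end

theory Submission
  imports Defs
begin

definition lt :: "'a rel \<Rightarrow> 'a \<Rightarrow> 'a \<Rightarrow> bool" where
  "lt W x y \<longleftrightarrow> (x,y)\<in>W \<and> x\<noteq>y"

lemma wo_total: assumes "well_order_on UNIV W" shows "(x,y)\<in>W \<or> (y,x)\<in>W"
proof -
  have t: "total_on UNIV W" and r: "refl_on UNIV W" using assms
    unfolding well_order_on_def linear_order_on_def partial_order_on_def preorder_on_def by auto
  show ?thesis
  proof (cases "x = y")
    case True then show ?thesis using r unfolding refl_on_def by simp
  next
    case False then show ?thesis using t unfolding total_on_def by simp
  qed
qed

lemma wo_trans: "well_order_on UNIV W \<Longrightarrow> (x,y)\<in>W \<Longrightarrow> (y,z)\<in>W \<Longrightarrow> (x,z)\<in>W"
  unfolding well_order_on_def linear_order_on_def partial_order_on_def preorder_on_def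
  by (meson transD)

lemma wo_antisym: "well_order_on UNIV W \<Longrightarrow> (x,y)\<in>W \<Longrightarrow> (y,x)\<in>W \<Longrightarrow> x = y"
  unfolding well_order_on_def linear_order_on_def partial_order_on_def
  by (meson antisymD)

lemma wo_wf: "well_order_on UNIV W \<Longrightarrow> wf (W - Id)"
  unfolding well_order_on_def by blast

lemma lt_trans: "well_order_on UNIV W \<Longrightarrow> lt W x y \<Longrightarrow> lt W y z \<Longrightarrow> lt W x z"
  unfolding lt_def using wo_trans wo_antisym by metis

lemma lt_asym: "well_order_on UNIV W \<Longrightarrow> lt W x y \<Longrightarrow> \<not> lt W y x"
  unfolding lt_def using wo_antisym by metis

lemma lt_total: "well_order_on UNIV W \<Longrightarrow> x \<noteq> y \<Longrightarrow> lt W x y \<or> lt W y x"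
  unfolding lt_def using wo_total by metis

lemma underS_lt: "x \<in> underS W a \<longleftrightarrow> lt W x a"
  unfolding underS_def lt_def by auto

definition wmin :: "'a rel \<Rightarrow> 'a set \<Rightarrow> 'a" where
  "wmin W S = (SOME m. m \<in> S \<and> (\<forall>z\<in>S. (m,z)\<in>W))"

lemma wmin: assumes "well_order_on UNIV W" "S \<noteq> {}"
  shows "wmin W S \<in> S \<and> (\<forall>z\<in>S. (wmin W S, z)\<in>W)"
proof -
  obtain x where x: "x \<in> S" using assms(2) by blast
  have "\<exists>m. m \<in> S \<and> (\<forall>z\<in>S. (m,z)\<in>W)"
  proof (rule wfE_min[OF wo_wf[OF assms(1)] x])
    fix z assume z: "z \<in> S" and h: "\<And>y. (y, z) \<in> W - Id \<Longrightarrow> y \<notin> S"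
    show ?thesis
    proof (intro exI[of _ z] conjI z ballI)
      fix y assume "y \<in> S"
      with h have "(y,z) \<notin> W - Id" by blast
      then show "(z,y) \<in> W" using wo_total[OF assms(1), of y z]
        using wo_total[OF assms(1), of z z] by auto
    qed
  qed
  then show ?thesis unfolding wmin_def by (rule someI_ex)
qed

primrec nn :: "'a rel \<Rightarrow> nat \<Rightarrow> 'a" where
  "nn W 0 = wmin W UNIV"
| "nn W (Suc i) = wmin W {y. lt W (nn W i) y}"

declare nn.simps[simp del]

lemma above_ex: assumes "omega1_order W" shows "\<exists>y. lt W x y"
proof -
  have wo: "well_order_on UNIV W" and unc: "\<not> countable (UNIV::'a set)"
    and cu: "countable (underS W x)" using assms unfolding omega1_order_def by auto
  have "countable (insert x (underS W x))" using cu by simp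
  then have "insert x (underS W x) \<noteq> UNIV" using unc by metis
  then obtain y where "y \<notin> insert x (underS W x)" by blast
  then have "y \<noteq> x" "\<not> lt W y x" by (auto simp: underS_lt)
  then show ?thesis using lt_total[OF wo] by blast
qed

lemma nn_lt: assumes "omega1_order W" shows "lt W (nn W i) (nn W (Suc i))"
proof -
  have wo: "well_order_on UNIV W" using assms unfolding omega1_order_def by auto
  have "{y. lt W (nn W i) y} \<noteq> {}" using above_ex[OF assms] by auto
  from wmin[OF wo this] have "lt W (nn W i) (wmin W {y. lt W (nn W i) y})" by blast
  then show ?thesis by (simp only: nn.simps)
qed

lemma nn_mono: assumes "omega1_order W" shows "i < j \<Longrightarrow> lt W (nn W i) (nn W j)"
proof (induction j)
  case 0 then show ?case by simp
next
  case (Suc j)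
  have wo: "well_order_on UNIV W" using assms unfolding omega1_order_def by auto
  show ?case
  proof (cases "i = j")
    case True then show ?thesis using nn_lt[OF assms] by simp
  next
    case False then have "i < j" using Suc by simp
    then show ?thesis using Suc nn_lt[OF assms, of j] lt_trans[OF wo] by blast
  qed
qed

lemma nn_inj: assumes "omega1_order W" shows "inj (nn W)"
proof (rule injI)
  fix i j assume e: "nn W i = nn W j"
  have wo: "well_order_on UNIV W" using assms unfolding omega1_order_def by auto
  show "i = j"
  proof (rule ccontr)
    assume "i \<noteq> j"
    then have "i < j \<or> j < i" by arith
    then have "lt W (nn W i) (nn W j) \<or> lt W (nn W j) (nn W i)" using nn_mono[OF assms] by blast
    then show False using e unfolding lt_def by auto
  qed
qed

lemma nn_below: assumes "omega1_order W" "y \<notin> range (nn W)" shows "lt W (nn W i) y"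
proof (induction i)
  have wo: "well_order_on UNIV W" using assms unfolding omega1_order_def by auto
  case 0
  have "(wmin W UNIV, y) \<in> W" using wmin[OF wo, of UNIV] by blast
  then have "(nn W 0, y) \<in> W" by (simp only: nn.simps)
  moreover have "y \<noteq> nn W 0" using assms(2) by auto
  ultimately show ?case unfolding lt_def by auto
next
  have wo: "well_order_on UNIV W" using assms unfolding omega1_order_def by auto
  case (Suc i)
  then have "y \<in> {y. lt W (nn W i) y}" by simp
  then have ne: "{y. lt W (nn W i) y} \<noteq> {}" by blast
  have "(wmin W {y. lt W (nn W i) y}, y) \<in> W" using wmin[OF wo ne] \<open>y \<in> {y. lt W (nn W i) y}\<close> by blast
  then have "(nn W (Suc i), y) \<in> W" by (simp only: nn.simps)
  moreover have "y \<noteq> nn W (Suc i)" using assms(2) by auto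
  ultimately show ?case unfolding lt_def by auto
qed

lemma bounded: assumes "omega1_order W" "countable D" shows "\<exists>a. D \<subseteq> underS W a"
proof -
  have wo: "well_order_on UNIV W" and unc: "\<not> countable (UNIV::'a set)"
    and cu: "\<And>x. countable (underS W x)" using assms unfolding omega1_order_def by auto
  have "countable (D \<union> (\<Union>x\<in>D. underS W x))" using assms(2) cu by auto
  then have "D \<union> (\<Union>x\<in>D. underS W x) \<noteq> UNIV" using unc by metis
  then obtain a where a: "a \<notin> D \<union> (\<Union>x\<in>D. underS W x)" by blast
  have "D \<subseteq> underS W a"
  proof
    fix x assume x: "x \<in> D"
    then have "x \<noteq> a" "\<not> lt W a x" using a by (auto simp: underS_lt)
    then show "x \<in> underS W a" using lt_total[OF wo] by (auto simp: underS_lt)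
  qed
  then show ?thesis by blast
qed

definition dset :: "('a \<Rightarrow> nat set) \<Rightarrow> 'a \<Rightarrow> nat set" where
  "dset c y = {2*i | i. i \<in> c y} \<union> {2*i+1 | i. i \<notin> c y}"

lemma dset_sub: assumes "inj c" "dset c y \<subseteq> dset c z" shows "y = z"
proof -
  have "c y = c z"
  proof (intro set_eqI iffI)
    fix i assume "i \<in> c y"
    then have "2*i \<in> dset c z" using assms(2) unfolding dset_def by blast
    then show "i \<in> c z" unfolding dset_def by auto presburger
  next
    fix i assume i: "i \<in> c z"
    show "i \<in> c y"
    proof (rule ccontr)
      assume "i \<notin> c y"
      then have "2*i+1 \<in> dset c z" using assms(2) unfolding dset_def by blast
      then show False using i unfolding dset_def by auto presburger
    qed
  qed
  then show ?thesis using assms(1) by (simp add: inj_eq)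
qed

lemma dset_two: "\<exists>j\<in>dset c y. j \<in> {2,3}" "\<exists>j\<in>dset c y. j \<in> {4,5}"
  unfolding dset_def
  by (cases "1 \<in> c y"; force) (cases "2 \<in> c y"; force)

definition RR :: "'a rel \<Rightarrow> ('a \<Rightarrow> nat set) \<Rightarrow> ('a \<times> 'a) set" where
  "RR W c = {(nn W 0, nn W 0)} \<union> range (\<lambda>i. (nn W i, nn W (Suc i)))
     \<union> {(y, nn W j) | y j. y \<notin> range (nn W) \<and> j \<in> dset c y}"

lemma RR_loop: assumes "omega1_order W" "(x,x) \<in> RR W c" shows "x = nn W 0"
  using assms(2) nn_inj[OF assms(1)] unfolding RR_def by (auto dest: injD)

lemma RR_nn: assumes "omega1_order W" "(nn W m, z) \<in> RR W c"
  shows "z = nn W (Suc m) \<or> (m = 0 \<and> z = nn W 0)"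
  using assms(2) nn_inj[OF assms(1)] unfolding RR_def by (auto dest: injD)

lemma RR_other: assumes "y \<notin> range (nn W)" "(y, z) \<in> RR W c"
  shows "\<exists>j\<in>dset c y. z = nn W j"
  using assms unfolding RR_def by auto

lemma RR_in: "(nn W 0, nn W 0) \<in> RR W c" "(nn W i, nn W (Suc i)) \<in> RR W c"
  "y \<notin> range (nn W) \<Longrightarrow> j \<in> dset c y \<Longrightarrow> (y, nn W j) \<in> RR W c"
  unfolding RR_def by auto

lemma rigid:
  assumes o: "omega1_order W" and c: "inj c" and kinj: "inj_on k (underS W a)"
    and hom: "\<And>x y. (x,y) \<in> RR W c \<Longrightarrow> x \<in> underS W a \<Longrightarrow> y \<in> underS W a \<Longrightarrow> (k x, k y) \<in> RR W c"
  shows "\<forall>x\<in>underS W a. k x = x"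
proof -
  have wo: "well_order_on UNIV W" using o unfolding omega1_order_def by auto
  have N: "nn W i \<in> underS W a \<longrightarrow> k (nn W i) = nn W i" for i
  proof (induction i)
    case 0
    show ?case using hom[OF RR_in(1)] RR_loop[OF o] by blast
  next
    case (Suc i)
    show ?case
    proof
      assume s: "nn W (Suc i) \<in> underS W a"
      then have si: "nn W i \<in> underS W a"
        using nn_lt[OF o, of i] lt_trans[OF wo] by (auto simp: underS_lt)
      with Suc have ki: "k (nn W i) = nn W i" by simp
      have "(nn W i, k (nn W (Suc i))) \<in> RR W c" using hom[OF RR_in(2) si s] ki by simp
      from RR_nn[OF o this]
      have "k (nn W (Suc i)) = nn W (Suc i) \<or> (i = 0 \<and> k (nn W (Suc i)) = nn W 0)" .
      moreover have "k (nn W (Suc i)) \<noteq> k (nn W i)"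
      proof
        assume "k (nn W (Suc i)) = k (nn W i)"
        then have "nn W (Suc i) = nn W i" using inj_onD[OF kinj _ s si] by blast
        then show False using nn_inj[OF o] by (auto dest: injD)
      qed
      ultimately show "k (nn W (Suc i)) = nn W (Suc i)" using ki by auto
    qed
  qed
  show ?thesis
  proof
    fix y assume y: "y \<in> underS W a"
    show "k y = y"
    proof (cases "y \<in> range (nn W)")
      case True then show ?thesis using N y by auto
    next
      case False
      have Na: "nn W j \<in> underS W a" for j
        using nn_below[OF o False] y lt_trans[OF wo] by (auto simp: underS_lt)
      have E: "(k y, nn W j) \<in> RR W c" if "j \<in> dset c y" for j
        using hom[OF RR_in(3)[OF False that] y Na] N Na by simp
      show ?thesis
      proof (cases "k y \<in> range (nn W)")
        case True
        then obtain m where m: "k y = nn W m" by auto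
        obtain j1 where j1: "j1 \<in> dset c y" "j1 \<in> {2,3}" using dset_two(1)[of c y] by blast
        obtain j2 where j2: "j2 \<in> dset c y" "j2 \<in> {4,5}" using dset_two(2)[of c y] by blast
        have "nn W j1 = nn W (Suc m) \<or> (m = 0 \<and> nn W j1 = nn W 0)"
          using RR_nn[OF o, of m "nn W j1" c] E[OF j1(1)] m by simp
        then have "j1 = Suc m" using j1(2) nn_inj[OF o] by (auto dest: injD)
        moreover have "nn W j2 = nn W (Suc m) \<or> (m = 0 \<and> nn W j2 = nn W 0)"
          using RR_nn[OF o, of m "nn W j2" c] E[OF j2(1)] m by simp
        then have "j2 = Suc m" using j2(2) nn_inj[OF o] by (auto dest: injD)
        ultimately show ?thesis using j1(2) j2(2) by auto
      next
        case F2: False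
        have "dset c y \<subseteq> dset c (k y)"
        proof
          fix j assume "j \<in> dset c y"
          from RR_other[OF F2 E[OF this]] obtain j' where "j' \<in> dset c (k y)" "nn W j = nn W j'" by blast
          then show "j \<in> dset c (k y)" using nn_inj[OF o] by (auto dest: injD)
        qed
        then show ?thesis using dset_sub[OF c] by metis
      qed
    qed
  qed
qed

lemma pimg_comp: "pimg h (pimg g A) = pimg (h \<circ> g) A"
  unfolding pimg_def by (auto simp: image_iff)

lemma pimg_id: "pimg id A = A"
  unfolding pimg_def by auto

definition QQ :: "'a rel \<Rightarrow> ('a \<Rightarrow> nat set) \<Rightarrow> ('a \<Rightarrow> 'a) set \<Rightarrow> ('a \<times> 'a) set set" where
  "QQ W c G = {A. \<forall>B \<subseteq> A. countable B \<longrightarrow> (\<exists>g\<in>G. B \<subseteq> pimg g (RR W c))}"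

lemma QQ_countable: "countable A \<Longrightarrow> A \<in> QQ W c G \<longleftrightarrow> (\<exists>g\<in>G. A \<subseteq> pimg g (RR W c))"
proof
  assume "A \<in> QQ W c G" "countable A" then show "\<exists>g\<in>G. A \<subseteq> pimg g (RR W c)" unfolding QQ_def by blast
next
  assume "\<exists>g\<in>G. A \<subseteq> pimg g (RR W c)" then show "A \<in> QQ W c G" unfolding QQ_def by blast
qed

lemma QQ_img:
  assumes G: "perm_subgroup G" and h: "h \<in> G" and A: "A \<in> QQ W c G"
  shows "pimg h A \<in> QQ W c G"
  unfolding QQ_def
proof (intro CollectI allI impI)
  fix B assume B: "B \<subseteq> pimg h A" "countable B"
  have bh: "bij h" using G h unfolding perm_subgroup_def by auto
  define B' where "B' = pimg (inv h) B"
  have "countable B'" unfolding B'_def pimg_def using B(2) by simp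
  moreover have "B' \<subseteq> A"
  proof
    fix z assume "z \<in> B'"
    then obtain u v where "(u,v) \<in> B" "z = (inv h u, inv h v)" unfolding B'_def pimg_def by auto
    moreover from this(1) B(1) obtain x y where "(x,y) \<in> A" "u = h x" "v = h y"
      unfolding pimg_def by auto
    ultimately show "z \<in> A" using bij_is_inj[OF bh] by (simp add: inv_f_f)
  qed
  ultimately obtain g where g: "g \<in> G" "B' \<subseteq> pimg g (RR W c)" using A unfolding QQ_def by blast
  have "B = pimg h B'" unfolding B'_def pimg_comp
    using bij_is_surj[OF bh] unfolding pimg_def by (force simp: surj_f_inv_f image_iff)
  also have "\<dots> \<subseteq> pimg h (pimg g (RR W c))" using g(2) unfolding pimg_def by auto
  also have "\<dots> = pimg (h \<circ> g) (RR W c)" by (rule pimg_comp)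
  finally show "\<exists>g\<in>G. B \<subseteq> pimg g (RR W c)" using g(1) h G unfolding perm_subgroup_def by blast
qed

lemma QQ_fix:
  assumes G: "perm_subgroup G" and h: "h \<in> G"
  shows "fixes_Q h (QQ W c G)"
  unfolding fixes_Q_def
proof
  fix A
  have bh: "bij h" using G h unfolding perm_subgroup_def by auto
  have hi: "inv h \<in> G" using G h unfolding perm_subgroup_def by auto
  show "A \<in> QQ W c G \<longleftrightarrow> pimg h A \<in> QQ W c G"
  proof
    assume "A \<in> QQ W c G" then show "pimg h A \<in> QQ W c G" using QQ_img[OF G h] by blast
  next
    assume "pimg h A \<in> QQ W c G"
    from QQ_img[OF G hi this] have "pimg (inv h \<circ> h) A \<in> QQ W c G" by (simp add: pimg_comp)
    moreover have "inv h \<circ> h = id" using bij_is_inj[OF bh] by (simp add: inv_o_cancel)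
    ultimately show "A \<in> QQ W c G" by (simp add: pimg_id)
  qed
qed

definition Ra :: "'a rel \<Rightarrow> ('a \<Rightarrow> nat set) \<Rightarrow> 'a \<Rightarrow> ('a \<times> 'a) set" where
  "Ra W c a = RR W c \<inter> (underS W a \<times> underS W a)"

lemma Ra_countable: assumes "omega1_order W" shows "countable (Ra W c a)"
proof -
  have "countable (underS W a)" using assms unfolding omega1_order_def by blast
  then have "countable (underS W a \<times> underS W a)" by simp
  moreover have "Ra W c a \<subseteq> underS W a \<times> underS W a" unfolding Ra_def by blast
  ultimately show ?thesis by (rule countable_subset[rotated])
qed

lemma Ra_in: assumes "perm_subgroup G" shows "Ra W c a \<in> QQ W c G"
proof -
  have "id \<in> G" using assms unfolding perm_subgroup_def by blast
  moreover have "B \<subseteq> pimg id (RR W c)" if "B \<subseteq> Ra W c a" for B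
    using that unfolding pimg_id Ra_def by blast
  ultimately show ?thesis unfolding QQ_def by blast
qed

lemma key:
  assumes o: "omega1_order W" and c: "inj c" and G: "perm_subgroup G"
    and pin: "inj_on p (underS W a)" and pQ: "pimg p (Ra W c a) \<in> QQ W c G"
  shows "\<exists>g\<in>G. \<forall>x\<in>underS W a. p x = g x"
proof -
  have "countable (pimg p (Ra W c a))" unfolding pimg_def using Ra_countable[OF o] by simp
  then obtain g where g: "g \<in> G" "pimg p (Ra W c a) \<subseteq> pimg g (RR W c)"
    using pQ QQ_countable by blast
  have bg: "bij g" using G g(1) unfolding perm_subgroup_def by auto
  define k where "k = inv g \<circ> p"
  have kinj: "inj_on k (underS W a)" unfolding k_def
    using pin bij_is_inj[OF bij_imp_bij_inv[OF bg]] by (simp add: comp_inj_on inj_on_subset)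
  have hom: "(k x, k y) \<in> RR W c" if "(x,y) \<in> RR W c" "x \<in> underS W a" "y \<in> underS W a" for x y
  proof -
    have "(x,y) \<in> Ra W c a" using that unfolding Ra_def by auto
    then have "(p x, p y) \<in> pimg g (RR W c)" using g(2) unfolding pimg_def by blast
    then obtain u v where "(u,v) \<in> RR W c" "p x = g u" "p y = g v" unfolding pimg_def by auto
    then show ?thesis unfolding k_def using bij_is_inj[OF bg] by (simp add: inv_f_f)
  qed
  have "\<forall>x\<in>underS W a. k x = x" by (rule rigid[OF o c kinj hom])
  then have "\<forall>x\<in>underS W a. p x = g x" unfolding k_def
    using bij_is_surj[OF bg] by (metis comp_apply surj_f_inv_f)
  then show ?thesis using g(1) by blast
qed

theorem proposition26:
  fixes W :: "'a rel" and G :: "('a \<Rightarrow> 'a) set"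
  assumes "omega1_order W"
    and CH: "(UNIV :: nat set set) \<approx> (UNIV :: 'a set)"
    and "perm_subgroup G"
    and "closed_in_sub {f. bij f} G"
    and "Baire_idx (UNIV :: 'a set) G"
  shows "\<exists>Q. good W Q \<and> Aut Q = G"
proof -
  note o = assms(1) and G = assms(3) and cl = assms(4)
  obtain h :: "nat set \<Rightarrow> 'a" where "bij_betw h UNIV UNIV" using CH unfolding eqpoll_def by blast
  then have "bij h" by simp
  define c where "c = inv h"
  have c: "inj c" unfolding c_def using \<open>bij h\<close> bij_imp_bij_inv bij_is_inj by blast
  define Q where "Q = QQ W c G"
  have qc: "q_closed Q" unfolding q_closed_def closed_in_sub_def
  proof (intro conjI ballI)
    fix P :: "'a \<times> 'a \<Rightarrow> bool" assume "P \<in> UNIV - {P. Collect P \<in> Q}"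
    then obtain B where B: "B \<subseteq> Collect P" "countable B" "\<not> (\<exists>g\<in>G. B \<subseteq> pimg g (RR W c))"
      unfolding Q_def QQ_def by blast
    define s where "s = (\<lambda>x. if x \<in> B then Some True else None)"
    have "dom s = B" unfolding s_def dom_def by auto
    moreover have "agrees s P" unfolding agrees_def s_def dom_def using B(1) by auto
    moreover have "\<forall>g\<in>{P. Collect P \<in> Q}. \<not> agrees s g"
    proof (intro ballI notI)
      fix P' assume P': "P' \<in> {P. Collect P \<in> Q}" and ag: "agrees s P'"
      have "B \<subseteq> Collect P'"
      proof
        fix x assume x: "x \<in> B"
        then have "x \<in> dom s" unfolding s_def by auto
        then have "s x = Some (P' x)" using ag unfolding agrees_def by blast
        then show "x \<in> Collect P'" using x unfolding s_def by auto
      qed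
      then show False using P' B unfolding Q_def QQ_def by blast
    qed
    ultimately show "\<exists>s. countable (dom s) \<and> agrees s P \<and> (\<forall>g\<in>{P. Collect P \<in> Q}. \<not> agrees s g)"
      using B(2) by metis
  qed auto
  have dc: "down_closed Q" unfolding down_closed_def Q_def QQ_def by blast
  have GA: "G \<subseteq> Aut Q" unfolding Aut_def Q_def using QQ_fix[OF G] G unfolding perm_subgroup_def by blast
  have AG: "Aut Q \<subseteq> G"
  proof
    fix f assume "f \<in> Aut Q"
    then have bf: "bij f" and ff: "fixes_Q f Q" unfolding Aut_def by auto
    show "f \<in> G"
    proof (rule ccontr)
      assume "f \<notin> G"
      then obtain s where s: "countable (dom s)" "agrees s f" "\<forall>g\<in>G. \<not> agrees s g"
        using cl bf unfolding closed_in_sub_def by blast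
      obtain a where a: "dom s \<subseteq> underS W a" using bounded[OF o s(1)] by blast
      have "Ra W c a \<in> Q" unfolding Q_def by (rule Ra_in[OF G])
      then have "pimg f (Ra W c a) \<in> QQ W c G" using ff unfolding fixes_Q_def Q_def by blast
      from key[OF o c G _ this] bij_is_inj[OF bf] obtain g where
        g: "g \<in> G" "\<forall>x\<in>underS W a. f x = g x" by (metis inj_on_subset subset_UNIV)
      have "agrees s g" using s(2) a g(2) unfolding agrees_def by auto
      then show False using s(3) g(1) by blast
    qed
  qed
  have hom: "\<exists>f. bij f \<and> fixes_Q f Q \<and> (\<forall>x\<in>underS W a. f x = p x)"
    if pin: "inj_on p (underS W a)" and pc: "compatible (underS W a) p Q" for a p
  proof -
    have "Ra W c a \<in> Q" unfolding Q_def by (rule Ra_in[OF G])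
    moreover have "Ra W c a \<subseteq> underS W a \<times> underS W a" unfolding Ra_def by auto
    ultimately have "pimg p (Ra W c a) \<in> QQ W c G" using pc unfolding compatible_def Q_def by blast
    from key[OF o c G pin this] obtain g where g: "g \<in> G" "\<forall>x\<in>underS W a. p x = g x" by blast
    then show ?thesis using GA unfolding Aut_def by force
  qed
  have "good W Q" unfolding good_def using qc dc hom by blast
  moreover have "Aut Q = G" using GA AG by blast
  ultimately show ?thesis by blast
qed

end
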